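(* Let $A\in\mathbb{R}^{n\times n}$ be a Hurwitz matrix. Then for every $r>0$, $0\in\mathbb{R}^n$ is URGAS for the hybrid system (2.2) corresponding to the implicit Euler method applied to $\dot x=Ax$ with $\varphi(x)\equiv r$, i.e. with $F(h,x):=A(I-hA)^{-1}x$ (so that arbitrary step sizes $h_i\in(0,r]$ are allowed).
   Context: A matrix is Hurwitz if all its eigenvalues have negative real part (then $I-hA$ is invertible for all $h\ge0$). The hybrid system (2.2): for each locally bounded $u:\mathbb{R}^+\to\mathbb{R}^+$ and $x_0$, $\tau_0=0$, $x(0)=x_0$, $h_i=\varphi(x(\tau_i))\exp(-u(\tau_i))$, $\tau_{i+1}=\tau_i+h_i$, $x(t)=x(\tau_i)+(t-\tau_i)F(h_i,x(\tau_i))$ on $[\tau_i,\tau_{i+1}]$; solution $x(t,x_0;u)$. URGAS: (a) for every $\varepsilon>0$ there is $\delta>0$ with $|x_0|<\delta\Rightarrow|x(t,x_0;u)|<\varepsilon$ for all $t\ge0$ and all $u$; (b) for every $R$, $\sup\{|x(t,x_0;u)|:t\ge0,|x_0|\le R,u\}<\infty$; (c) for all $\varepsilon,R$ there is $T$ with $|x(t,x_0;u)|\le\varepsilon$ for $t\ge T$, $|x_0|\le R$, all locally bounded $u\ge0$. *)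

theory Defs
  imports "HOL-Analysis.Analysis"
begin

definition hurwitz :: "real^'n^'n \<Rightarrow> bool" where
  "hurwitz A \<longleftrightarrow>
     (\<forall>(c::complex) (v::complex^'n). v \<noteq> 0 \<and>
        (\<chi> i j. complex_of_real (A $ i $ j)) *v v = c *s v \<longrightarrow> Re c < 0)"

fun hyb_grid :: "(real^'n \<Rightarrow> real) \<Rightarrow> (real \<Rightarrow> real^'n \<Rightarrow> real^'n) \<Rightarrow> real^'n
                 \<Rightarrow> (real \<Rightarrow> real) \<Rightarrow> nat \<Rightarrow> real \<times> (real^'n)" where
  "hyb_grid \<phi> F x0 u 0 = (0, x0)"
| "hyb_grid \<phi> F x0 u (Suc i) =
     (let (\<tau>, x) = hyb_grid \<phi> F x0 u i; h = \<phi> x * exp (- u \<tau>) in (\<tau> + h, x + h *\<^sub>R F h x))"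

definition hyb_tau where "hyb_tau \<phi> F x0 u i = fst (hyb_grid \<phi> F x0 u i)"
definition hyb_step where "hyb_step \<phi> F x0 u i = \<phi> (snd (hyb_grid \<phi> F x0 u i)) * exp (- u (hyb_tau \<phi> F x0 u i))"

definition hyb_sol :: "(real^'n \<Rightarrow> real) \<Rightarrow> (real \<Rightarrow> real^'n \<Rightarrow> real^'n) \<Rightarrow> real^'n
                 \<Rightarrow> (real \<Rightarrow> real) \<Rightarrow> real \<Rightarrow> real^'n" where
  "hyb_sol \<phi> F x0 u t =
     (let i = (LEAST i. t < hyb_tau \<phi> F x0 u (Suc i));
          xi = snd (hyb_grid \<phi> F x0 u i)
      in xi + (t - hyb_tau \<phi> F x0 u i) *\<^sub>R F (hyb_step \<phi> F x0 u i) xi)"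

definition admissible_input :: "(real \<Rightarrow> real) \<Rightarrow> bool" where
  "admissible_input u \<longleftrightarrow> (\<forall>t\<ge>0. u t \<ge> 0) \<and> (\<forall>T\<ge>0. \<exists>M. \<forall>t\<in>{0..T}. \<bar>u t\<bar> \<le> M)"

definition URGAS :: "(real^'n \<Rightarrow> real) \<Rightarrow> (real \<Rightarrow> real^'n \<Rightarrow> real^'n) \<Rightarrow> bool" where
  "URGAS \<phi> F \<longleftrightarrow>
     (\<forall>\<epsilon>>0. \<exists>\<delta>>0. \<forall>x0 u t. norm x0 < \<delta> \<and> admissible_input u \<and> t \<ge> 0
                         \<longrightarrow> norm (hyb_sol \<phi> F x0 u t) < \<epsilon>)
   \<and> (\<forall>R. \<exists>B. \<forall>x0 u t. norm x0 \<le> R \<and> admissible_input u \<and> t \<ge> 0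
                         \<longrightarrow> norm (hyb_sol \<phi> F x0 u t) \<le> B)
   \<and> (\<forall>\<epsilon>>0. \<forall>R. \<exists>T. \<forall>x0 u t. norm x0 \<le> R \<and> admissible_input u \<and> t \<ge> T
                         \<longrightarrow> norm (hyb_sol \<phi> F x0 u t) \<le> \<epsilon>)"

definition implicit_euler_F :: "real^'n^'n \<Rightarrow> real \<Rightarrow> real^'n \<Rightarrow> real^'n" where
  "implicit_euler_F A h x = (A ** matrix_inv (mat 1 - h *\<^sub>R A)) *v x"

end

theory Submission
  imports Defs "Jordan_Normal_Form.Schur_Decomposition"
begin


no_notation Matrix.vec_index (infixl "$" 100)

definition enum_n :: "nat \<Rightarrow> 'n::finite" where
  "enum_n = (SOME e. bij_betw e {..<CARD('n)} UNIV)"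

lemma enum_n_bij: "bij_betw (enum_n :: nat \<Rightarrow> 'n::finite) {..<CARD('n)} UNIV"
proof -
  have "\<exists>e::nat \<Rightarrow> 'n. bij_betw e {..<CARD('n)} UNIV"
    using ex_bij_betw_nat_finite[of "UNIV :: 'n set"] by (auto simp: lessThan_atLeast0)
  thus ?thesis unfolding enum_n_def by (rule someI_ex)
qed

definition idx_n :: "'n::finite \<Rightarrow> nat" where
  "idx_n = inv_into {..<CARD('n)} enum_n"

lemma idx_n_lt: "idx_n (i::'n::finite) < CARD('n)"
  using enum_n_bij[where 'n='n] unfolding idx_n_def
  by (metis UNIV_I bij_betw_def inv_into_into lessThan_iff)

lemma enum_idx[simp]: "enum_n (idx_n (i::'n::finite)) = i"
  using enum_n_bij[where 'n='n] unfolding idx_n_def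
  by (simp add: bij_betw_inv_into_right)

lemma idx_enum[simp]: "a < CARD('n) \<Longrightarrow> idx_n (enum_n a :: 'n::finite) = a"
  using enum_n_bij[where 'n='n] unfolding idx_n_def
  by (simp add: bij_betw_inv_into_left)

lemma idx_n_inj: "idx_n (i::'n::finite) = idx_n j \<longleftrightarrow> i = j"
  by (metis enum_idx)

lemma sum_UNIV_enum: "(\<Sum>k\<in>(UNIV::'n::finite set). f k) = (\<Sum>a<CARD('n). f (enum_n a))"
  using sum.reindex_bij_betw[OF enum_n_bij, of f] by simp

definition toV :: "'a::comm_ring_1 Matrix.mat \<Rightarrow> 'a^'n::finite^'n" where
  "toV M = (\<chi> i j. M $$ (idx_n i, idx_n j))"

definition toM :: "'a::comm_ring_1^'n::finite^'n \<Rightarrow> 'a Matrix.mat" where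
  "toM X = Matrix.mat CARD('n) CARD('n) (\<lambda>(a,b). X $ enum_n a $ enum_n b)"

lemma toV_toM: "toV (toM X) = X"
  unfolding toV_def toM_def by (simp add: Finite_Cartesian_Product.vec_eq_iff idx_n_lt)

lemma toV_mult:
  assumes "M \<in> carrier_mat CARD('n) CARD('n)" "N \<in> carrier_mat CARD('n) CARD('n)"
  shows "(toV (M * N) :: 'a::comm_ring_1^'n::finite^'n) = toV M ** toV N"
proof -
  have "(toV (M * N) :: 'a^'n^'n) $ i $ j = (toV M ** toV N) $ i $ j" for i j
  proof -
    have "(toV (M * N) :: 'a^'n^'n) $ i $ j = (\<Sum>a<CARD('n). M $$ (idx_n i, a) * N $$ (a, idx_n j))"
      using assms idx_n_lt[of i] idx_n_lt[of j]
      by (simp add: toV_def scalar_prod_def lessThan_atLeast0 row_def col_def)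
    also have "\<dots> = (toV M ** toV N) $ i $ j"
      by (simp add: matrix_matrix_mult_def toV_def sum_UNIV_enum)
    finally show ?thesis .
  qed
  thus ?thesis by (simp add: Finite_Cartesian_Product.vec_eq_iff)
qed

lemma toV_one: "(toV (1\<^sub>m CARD('n)) :: 'a::comm_ring_1^'n::finite^'n) = Finite_Cartesian_Product.mat 1"
  by (simp add: Finite_Cartesian_Product.vec_eq_iff toV_def idx_n_lt Finite_Cartesian_Product.mat_def idx_n_inj)

lemma eigen_transfer:
  fixes X :: "'a::comm_ring_1^'n::finite^'n"
  assumes "eigenvalue (toM X) k"
  shows "\<exists>w. w \<noteq> 0 \<and> X *v w = k *s w"
proof -
  obtain v where v: "v \<in> carrier_vec CARD('n)" "v \<noteq> 0\<^sub>v CARD('n)" "toM X *\<^sub>v v = k \<cdot>\<^sub>v v"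
    using assms unfolding eigenvalue_def eigenvector_def by (auto simp: toM_def)
  define w where "w = (\<chi> i::'n. vec_index v (idx_n i))"
  have "w \<noteq> 0"
  proof
    assume "w = 0"
    hence "vec_index v a = 0" if "a < CARD('n)" for a
      using that by (metis (no_types, lifting) idx_enum vec_lambda_beta w_def zero_index)
    thus False using v(1,2) by (auto simp: Matrix.vec_eq_iff)
  qed
  moreover have "X *v w = k *s w"
  proof -
    have "(X *v w) $ i = (k *s w) $ i" for i
    proof -
      have "vec_index (toM X *\<^sub>v v) (idx_n i) = k * vec_index v (idx_n i)" using v(1,3) idx_n_lt[of i] by simp
      moreover have "vec_index (toM X *\<^sub>v v) (idx_n i) = (\<Sum>a<CARD('n). X $ i $ enum_n a * vec_index v a)"
        using v(1) idx_n_lt[of i]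
        by (simp add: toM_def scalar_prod_def lessThan_atLeast0 row_def)
      moreover have "(X *v w) $ i = (\<Sum>a<CARD('n). X $ i $ enum_n a * vec_index v a)"
        by (auto simp add: matrix_vector_mult_def w_def sum_UNIV_enum intro!: sum.cong)
      ultimately show ?thesis by (simp add: w_def)
    qed
    thus ?thesis by (simp add: Finite_Cartesian_Product.vec_eq_iff)
  qed
  ultimately show ?thesis by blast
qed



lemma inner_cmult_self: "inner (a::complex) (c * a) = Re c * (norm a)^2"
  unfolding cmod_power2 inner_complex_def by (simp add: algebra_simps power2_eq_square)

lemma norm_sq_vec: "(norm (z::'a::real_normed_vector^'n::finite))^2 = (\<Sum>i\<in>UNIV. (norm (z$i))^2)"
  unfolding norm_vec_def L2_set_def by (simp add: sum_nonneg)

lemma sum_split_aux: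
  fixes a b :: "'n::finite \<Rightarrow> real"
  shows "(\<Sum>i\<in>UNIV. \<Sum>j\<in>UNIV. (if i = j then a i else 0) + \<delta> * (b i + b j) / 2)
        = (\<Sum>i\<in>UNIV. a i) + \<delta> * CARD('n) * (\<Sum>i\<in>UNIV. b i)"
proof -
  have 1: "(\<Sum>j\<in>UNIV. (if i = j then a i else 0) + \<delta> * (b i + b j) / 2)
     = a i + \<delta>/2 * (CARD('n) * b i + (\<Sum>j\<in>UNIV. b j))" for i
    by (simp add: sum.distrib sum_distrib_left[symmetric] sum_divide_distrib[symmetric] algebra_simps)
  have "(\<Sum>i\<in>UNIV. \<Sum>j\<in>UNIV. (if i = j then a i else 0) + \<delta> * (b i + b j) / 2)
      = (\<Sum>i\<in>UNIV. a i + \<delta>/2 * (CARD('n) * b i + (\<Sum>j\<in>UNIV. b j)))" by (simp only: 1)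
  also have "\<dots> = (\<Sum>i\<in>UNIV. a i) + \<delta>/2 * (CARD('n) * (\<Sum>i\<in>UNIV. b i) + CARD('n) * (\<Sum>j\<in>UNIV. b j))"
    by (simp only: sum_distrib_left[symmetric] sum.distrib sum_constant)
  finally show ?thesis by (simp add: algebra_simps)
qed

lemma quad_est:
  fixes C :: "complex^'n::finite^'n" and z :: "complex^'n"
  assumes dg: "\<And>i. Re (C$i$i) \<le> -m" and od: "\<And>i j. i \<noteq> j \<Longrightarrow> norm (C$i$j) \<le> \<delta>" and d0: "\<delta> \<ge> 0"
  shows "inner z (C *v z) \<le> (-m + \<delta> * CARD('n)) * (norm z)^2"
proof -
  let ?n = "\<lambda>i. norm (z$i)"
  have t: "inner (z$i) (C$i$j * z$j) \<le> (if i = j then -m * (?n i)^2 else 0) + \<delta> * ((?n i)^2 + (?n j)^2) / 2" for i j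
  proof (cases "i = j")
    case True
    have "inner (z$i) (C$i$j * z$j) = Re (C$i$i) * (?n i)^2" using True inner_cmult_self by simp
    also have "\<dots> \<le> -m * (?n i)^2" using mult_right_mono[OF dg[of i], of "(?n i)^2"] by simp
    moreover have "\<delta> * (?n i)^2 \<ge> 0" using d0 by simp
    moreover have "\<delta> * ((?n i)^2 + (?n i)^2) / 2 = \<delta> * (?n i)^2" by simp
    ultimately have "inner (z$i) (C$i$j * z$j) \<le> -m * (?n i)^2 + \<delta> * ((?n i)^2 + (?n i)^2) / 2"
      by linarith
    thus ?thesis using True by simp
  next
    case False
    have "inner (z$i) (C$i$j * z$j) \<le> ?n i * norm (C$i$j * z$j)" by (rule norm_cauchy_schwarz)
    also have "\<dots> = norm (C$i$j) * (?n i * ?n j)" by (simp add: norm_mult)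
    also have "\<dots> \<le> \<delta> * (?n i * ?n j)" using od[OF False] by (simp add: mult_right_mono)
    also have "\<dots> \<le> \<delta> * ((?n i)^2 + (?n j)^2) / 2"
    proof -
      have "2 * (?n i * ?n j) \<le> (?n i)^2 + (?n j)^2" using sum_squares_bound[of "?n i" "?n j"] by (simp add: mult.assoc)
      from mult_left_mono[OF this d0] show ?thesis by simp
    qed
    finally show ?thesis using False by simp
  qed
  have "inner z (C *v z) = (\<Sum>i\<in>UNIV. \<Sum>j\<in>UNIV. inner (z$i) (C$i$j * z$j))"
    by (simp add: inner_vec_def matrix_vector_mult_def inner_sum_right)
  also have "\<dots> \<le> (\<Sum>i\<in>UNIV. \<Sum>j\<in>UNIV. (if i = j then -m * (?n i)^2 else 0) + \<delta> * ((?n i)^2 + (?n j)^2) / 2)"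
    by (intro sum_mono t)
  also have "\<dots> = (\<Sum>i\<in>UNIV. -m * (?n i)^2) + \<delta> * CARD('n) * (\<Sum>i\<in>UNIV. (?n i)^2)"
    by (rule sum_split_aux)
  also have "(\<Sum>i\<in>UNIV. -m * (?n i)^2) = -m * (\<Sum>i\<in>UNIV. (?n i)^2)"
    by (simp add: sum_distrib_left)
  finally show ?thesis by (simp add: norm_sq_vec algebra_simps)
qed



lemma schur_complex:
  fixes M :: "complex Matrix.mat"
  assumes M: "M \<in> carrier_mat n n"
  shows "\<exists>B P Q. B \<in> carrier_mat n n \<and> P \<in> carrier_mat n n \<and> Q \<in> carrier_mat n n \<and>
     P * Q = 1\<^sub>m n \<and> Q * P = 1\<^sub>m n \<and> M = P * B * Q \<and> upper_triangular B \<and>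
     (\<forall>i<n. eigenvalue M (B $$ (i,i)))"
proof -
  obtain es where es: "char_poly M = (\<Prod>a\<leftarrow>es. [:- a, 1:])" "length es = n"
    using char_poly_factorized[OF M] by blast
  obtain B P Q where sd: "schur_decomposition M es = (B,P,Q)" by (cases "schur_decomposition M es") auto
  from schur_decomposition[OF M es(1) sd]
  have sim: "similar_mat_wit M B P Q" and ut: "upper_triangular B" and dg: "diag_mat B = es" by auto
  from sim M have car: "B \<in> carrier_mat n n" "P \<in> carrier_mat n n" "Q \<in> carrier_mat n n"
    and eq: "P * Q = 1\<^sub>m n" "Q * P = 1\<^sub>m n" "M = P * B * Q"
    unfolding similar_mat_wit_def Let_def by auto
  have "eigenvalue M (B $$ (i,i))" if i: "i < n" for i
  proof -
    have "B $$ (i,i) \<in> set es" using dg i car unfolding diag_mat_def by auto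
    hence "poly (char_poly M) (B $$ (i,i)) = 0" unfolding es(1)
      by (auto simp: poly_prod_list prod_list_zero_iff)
    thus ?thesis using eigenvalue_root_char_poly[OF M] by simp
  qed
  thus ?thesis using car eq ut by blast
qed

abbreviation vI :: "'a::semiring_1^'n::finite^'n" where "vI \<equiv> Finite_Cartesian_Product.mat 1"

lemma vec_schur:
  fixes X :: "complex^'n::finite^'n"
  shows "\<exists>B P Q::complex^'n^'n. P ** Q = vI \<and> Q ** P = vI \<and> X = P ** B ** Q \<and>
     (\<forall>i j. idx_n j < idx_n i \<longrightarrow> B$i$j = 0) \<and> (\<forall>i. \<exists>w. w \<noteq> 0 \<and> X *v w = B$i$i *s w)"
proof -
  have M: "toM X \<in> carrier_mat CARD('n) CARD('n)" by (simp add: toM_def)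
  obtain B P Q where car: "B \<in> carrier_mat CARD('n) CARD('n)" "P \<in> carrier_mat CARD('n) CARD('n)"
      "Q \<in> carrier_mat CARD('n) CARD('n)" and eq: "P * Q = 1\<^sub>m CARD('n)" "Q * P = 1\<^sub>m CARD('n)"
      "toM X = P * B * Q" and ut: "upper_triangular B"
      and ev: "\<forall>i<CARD('n). eigenvalue (toM X) (B $$ (i,i))"
    using schur_complex[OF M] by blast
  define Bv where "Bv = (toV B :: complex^'n^'n)"
  define Pv where "Pv = (toV P :: complex^'n^'n)"
  define Qv where "Qv = (toV Q :: complex^'n^'n)"
  have PB: "P * B \<in> carrier_mat CARD('n) CARD('n)" using car by simp
  have "X = toV (toM X)" by (simp add: toV_toM)
  also have "\<dots> = Pv ** Bv ** Qv"
    unfolding eq(3) Pv_def Bv_def Qv_def using car PB by (simp add: toV_mult matrix_mul_assoc)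
  finally have 1: "X = Pv ** Bv ** Qv" .
  have 2: "Pv ** Qv = vI" "Qv ** Pv = vI"
    unfolding Pv_def Qv_def using car eq by (simp_all add: toV_mult[symmetric] toV_one)
  have 3: "\<forall>i j. idx_n j < idx_n i \<longrightarrow> Bv$i$j = 0"
    using ut car idx_n_lt unfolding Bv_def toV_def upper_triangular_def by auto
  have 4: "\<forall>i. \<exists>w. w \<noteq> 0 \<and> X *v w = Bv$i$i *s w"
  proof
    fix i :: 'n
    have "eigenvalue (toM X) (Bv$i$i)" using ev idx_n_lt[of i] by (simp add: Bv_def toV_def)
    thus "\<exists>w. w \<noteq> 0 \<and> X *v w = Bv$i$i *s w" by (rule eigen_transfer)
  qed
  show ?thesis apply (rule exI[of _ Bv], rule exI[of _ Pv], rule exI[of _ Qv]) using 1 2 3 4 by blast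
qed

lemma diag_mult_left: "((\<chi> i j. if i = j then d i else 0) ** (X::'a::semiring_1^'n::finite^'n)) $ i $ j = d i * X$i$j"
proof -
  have "(\<Sum>k\<in>UNIV. (if i = k then d i else 0) * X$k$j) = (\<Sum>k\<in>UNIV. if i = k then d i * X$k$j else 0)"
    by (rule sum.cong) auto
  thus ?thesis by (simp add: matrix_matrix_mult_def)
qed

lemma diag_mult_right: "((X::'a::semiring_1^'n::finite^'n) ** (\<chi> i j. if i = j then d i else 0)) $ i $ j = X$i$j * d j"
proof -
  have "(\<Sum>k\<in>UNIV. X$i$k * (if k = j then d k else 0)) = (\<Sum>k\<in>UNIV. if k = j then X$i$k * d k else 0)"
    by (rule sum.cong) auto
  thus ?thesis by (simp add: matrix_matrix_mult_def)
qed

definition cmat :: "real^'n^'n \<Rightarrow> complex^'n^'n" where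
  "cmat A = (\<chi> i j. complex_of_real (A$i$j))"



lemma hurwitz_lyap:
  fixes A :: "real^'n::finite^'n"
  assumes H: "hurwitz A"
  shows "\<exists>W Wi C::complex^'n^'n. \<exists>\<mu>>0. Wi ** W = vI \<and> W ** cmat A = C ** W \<and>
            (\<forall>z. inner z (C *v z) \<le> -\<mu> * (norm z)^2)"
proof -
  obtain B P Q :: "complex^'n^'n" where PQ: "P ** Q = vI" "Q ** P = vI" and AB: "cmat A = P ** B ** Q"
    and ut: "\<And>i j. idx_n j < idx_n i \<Longrightarrow> B$i$j = 0"
    and ev: "\<And>i. \<exists>w. w \<noteq> 0 \<and> cmat A *v w = B$i$i *s w"
    using vec_schur[of "cmat A"] by blast
  have neg: "Re (B$i$i) < 0" for i
  proof -
    obtain w where "w \<noteq> 0" "cmat A *v w = B$i$i *s w" using ev by blast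
    thus ?thesis using H unfolding hurwitz_def cmat_def by blast
  qed
  define m where "m = Min (range (\<lambda>i. - Re (B$i$i)))"
  have m0: "m > 0" unfolding m_def using neg by (simp add: Min_gr_iff)
  have mle: "Re (B$i$i) \<le> -m" for i
  proof -
    have "m \<le> - Re (B$i$i)" unfolding m_def by (rule Min_le) auto
    thus ?thesis by simp
  qed
  define K where "K = (\<Sum>i\<in>UNIV. \<Sum>j\<in>UNIV. norm (B$i$j))"
  have Kle: "norm (B$i$j) \<le> K" for i j
  proof -
    have "norm (B$i$j) \<le> (\<Sum>j\<in>UNIV. norm (B$i$j))" by (rule member_le_sum) auto
    also have "\<dots> \<le> K" unfolding K_def by (rule member_le_sum) (auto intro: sum_nonneg)
    finally show ?thesis .
  qed
  have K0: "K \<ge> 0" unfolding K_def by (intro sum_nonneg) auto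
  define \<delta> where "\<delta> = m / (2 * CARD('n))"
  have d0: "\<delta> > 0" unfolding \<delta>_def using m0 by simp
  have dC: "-m + \<delta> * CARD('n) = -(m/2)" unfolding \<delta>_def by simp
  define \<epsilon> where "\<epsilon> = min 1 (\<delta> / (K + 1))"
  have e0: "\<epsilon> > 0" and e1: "\<epsilon> \<le> 1" unfolding \<epsilon>_def using d0 K0 by auto
  have eK: "\<epsilon> * K \<le> \<delta>"
  proof -
    have "\<epsilon> * K \<le> \<delta> / (K + 1) * K" unfolding \<epsilon>_def using K0 by (intro mult_right_mono) auto
    also have "\<dots> \<le> \<delta>" using K0 d0 by (simp add: field_simps)
    finally show ?thesis .
  qed
  define D :: "complex^'n^'n" where "D = (\<chi> i j. if i = j then complex_of_real (\<epsilon> ^ idx_n i) else 0)"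
  define Di :: "complex^'n^'n" where "Di = (\<chi> i j. if i = j then complex_of_real ((1/\<epsilon>) ^ idx_n i) else 0)"
  have inv1: "(1/\<epsilon>) ^ k * \<epsilon> ^ k = 1" for k using e0 by (simp add: power_one_over)
  have inv2: "complex_of_real \<epsilon> ^ k * (1 / complex_of_real \<epsilon>) ^ k = 1" for k
  proof -
    have "complex_of_real \<epsilon> \<noteq> 0" using e0 by simp
    hence "complex_of_real \<epsilon> * (1 / complex_of_real \<epsilon>) = 1" by simp
    thus ?thesis by (metis power_mult_distrib power_one)
  qed
  have DDi: "D ** Di = vI"
    unfolding D_def Di_def
    by (simp add: Finite_Cartesian_Product.vec_eq_iff diag_mult_left Finite_Cartesian_Product.mat_def inv2)
  define C where "C = Di ** B ** D"
  define W where "W = Di ** Q"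
  define Wi where "Wi = P ** D"
  have 1: "Wi ** W = vI"
  proof -
    have "Wi ** W = P ** (D ** Di) ** Q" unfolding Wi_def W_def by (simp add: matrix_mul_assoc)
    thus ?thesis using PQ DDi by (simp add: matrix_mul_rid)
  qed
  have 2: "W ** cmat A = C ** W"
  proof -
    have "W ** cmat A = Di ** (Q ** P) ** B ** Q" unfolding W_def AB by (simp add: matrix_mul_assoc)
    also have "\<dots> = Di ** B ** Q" using PQ by (simp add: matrix_mul_rid)
    also have "\<dots> = Di ** B ** (D ** Di) ** Q" using DDi by (simp add: matrix_mul_rid)
    also have "\<dots> = C ** W" unfolding C_def W_def by (simp add: matrix_mul_assoc)
    finally show ?thesis .
  qed
  have Cij: "C$i$j = complex_of_real ((1/\<epsilon>) ^ idx_n i * \<epsilon> ^ idx_n j) * B$i$j" for i j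
  proof -
    have "C$i$j = (Di ** B)$i$j * complex_of_real (\<epsilon> ^ idx_n j)"
      unfolding C_def D_def by (simp add: diag_mult_right)
    also have "(Di ** B)$i$j = complex_of_real ((1/\<epsilon>) ^ idx_n i) * B$i$j"
      unfolding Di_def by (simp add: diag_mult_left)
    finally show ?thesis by (simp add: algebra_simps)
  qed
  have dg: "Re (C$i$i) \<le> -m" for i using mle[of i] by (simp add: Cij inv1)
  have od: "norm (C$i$j) \<le> \<delta>" if ij: "i \<noteq> j" for i j
  proof (cases "idx_n j < idx_n i")
    case True
    thus ?thesis using ut d0 by (simp add: Cij)
  next
    case False
    with ij idx_n_inj have lt: "idx_n i < idx_n j" by (metis linorder_neqE_nat)
    define a where "a = idx_n i"
    define b where "b = idx_n j"
    have "(1/\<epsilon>) ^ a * \<epsilon> ^ b = (1/\<epsilon>) ^ a * \<epsilon> ^ a * \<epsilon> ^ (b - a)"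
      using lt unfolding a_def b_def by (simp add: power_add[symmetric])
    also have "\<dots> = \<epsilon> ^ (b - a)" by (simp add: inv1)
    also have "\<dots> \<le> \<epsilon> ^ 1" using lt e0 e1 unfolding a_def b_def by (intro power_decreasing) auto
    finally have f: "(1/\<epsilon>) ^ a * \<epsilon> ^ b \<le> \<epsilon>" by simp
    have f0: "(1/\<epsilon>) ^ a * \<epsilon> ^ b \<ge> 0" using e0 by simp
    have "norm (C$i$j) = norm (complex_of_real ((1/\<epsilon>) ^ a * \<epsilon> ^ b)) * norm (B$i$j)"
      unfolding a_def b_def Cij by (rule norm_mult)
    also have "\<dots> = (1/\<epsilon>) ^ a * \<epsilon> ^ b * norm (B$i$j)"
      using f0 by (simp only: norm_of_real abs_of_nonneg)
    also have "\<dots> \<le> \<epsilon> * K" using f f0 Kle[of i j] e0 by (intro mult_mono) auto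
    also have "\<dots> \<le> \<delta>" by (rule eK)
    finally show ?thesis .
  qed
  have 3: "inner z (C *v z) \<le> -(m/2) * (norm z)^2" for z
    using quad_est[of C m \<delta> z, OF dg od] d0 dC by simp
  show ?thesis using 1 2 3 m0 by (intro exI[of _ W] exI[of _ Wi] exI[of _ C] exI[of _ "m/2"]) auto
qed



definition cx :: "real^'n \<Rightarrow> complex^'n" where
  "cx x = (\<chi> i. complex_of_real (x$i))"

lemma cx_mult: "cx (A *v x) = cmat A *v cx x"
  by (simp add: Finite_Cartesian_Product.vec_eq_iff cx_def cmat_def matrix_vector_mult_def)

lemma cx_diff: "cx (x - y) = cx x - cx y"
  by (simp add: Finite_Cartesian_Product.vec_eq_iff cx_def)

lemma cx_scaleR: "cx (h *\<^sub>R x) = h *\<^sub>R cx x"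
  by (simp add: Finite_Cartesian_Product.vec_eq_iff cx_def complex_eq_iff)

lemma norm_diff_scaleR_sq:
  fixes z w :: "'a::real_inner"
  shows "(norm (z - h *\<^sub>R w))^2 = (norm z)^2 - 2*h*inner z w + h^2*(norm w)^2"
  unfolding power2_norm_eq_inner by (simp add: inner_diff_left inner_diff_right inner_commute[of w z] algebra_simps power2_eq_square)

lemma cx_zero_iff: "cx x = 0 \<longleftrightarrow> x = 0"
  by (simp add: Finite_Cartesian_Product.vec_eq_iff cx_def)

lemma norm_cx: "norm (cx x) = norm x"
  by (simp add: norm_vec_def cx_def)

lemma cmv_scaleR: "(M::complex^'n::finite^'m::finite) *v (h *\<^sub>R v) = h *\<^sub>R (M *v v)"
  by (simp add: Finite_Cartesian_Product.vec_eq_iff matrix_vector_mult_def scaleR_sum_right)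

lemma norm_le_l1_gen: "norm (x::'a::real_normed_vector^'n::finite) \<le> (\<Sum>i\<in>UNIV. norm (x$i))"
  unfolding norm_vec_def by (rule L2_set_le_sum) simp

lemma norm_mv_le: "norm ((M::complex^'n::finite^'m::finite) *v v) \<le> (\<Sum>i\<in>UNIV. \<Sum>j\<in>UNIV. norm (M$i$j)) * norm v"
proof -
  have "norm (M *v v) \<le> (\<Sum>i\<in>UNIV. norm ((M *v v)$i))" by (rule norm_le_l1_gen)
  also have "\<dots> \<le> (\<Sum>i\<in>UNIV. \<Sum>j\<in>UNIV. norm (M$i$j) * norm v)"
  proof (rule sum_mono)
    fix i
    have "norm ((M *v v)$i) = norm (\<Sum>j\<in>UNIV. M$i$j * v$j)" by (simp add: matrix_vector_mult_def)
    also have "\<dots> \<le> (\<Sum>j\<in>UNIV. norm (M$i$j * v$j))" by (rule norm_sum)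
    also have "\<dots> \<le> (\<Sum>j\<in>UNIV. norm (M$i$j) * norm v)"
    proof (rule sum_mono)
      fix j
      have "norm (M$i$j * v$j) = norm (M$i$j) * norm (v$j)" by (rule norm_mult)
      also have "\<dots> \<le> norm (M$i$j) * norm v" by (rule mult_left_mono[OF Finite_Cartesian_Product.norm_nth_le]) simp
      finally show "norm (M$i$j * v$j) \<le> norm (M$i$j) * norm v" .
    qed
    finally show "norm ((M *v v)$i) \<le> (\<Sum>j\<in>UNIV. norm (M$i$j) * norm v)" .
  qed
  also have "\<dots> = (\<Sum>i\<in>UNIV. \<Sum>j\<in>UNIV. norm (M$i$j)) * norm v" by (simp add: sum_distrib_right)
  finally show ?thesis .
qed

lemma step_contract:
  fixes A :: "real^'n::finite^'n" and W C :: "complex^'n^'n"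
  assumes WC: "W ** cmat A = C ** W" and Cq: "\<And>z. inner z (C *v z) \<le> -\<mu> * (norm z)^2"
    and h: "h \<ge> 0" and xy: "y - h *\<^sub>R (A *v y) = x"
  shows "(norm (W *v cx y))^2 * (1 + 2*\<mu>*h) \<le> (norm (W *v cx x))^2"
proof -
  define z where "z = W *v cx y"
  have "W *v cx x = z - h *\<^sub>R (C *v z)"
    unfolding xy[symmetric] z_def cx_diff cx_scaleR cx_mult
    by (simp add: matrix_vector_mult_diff_distrib cmv_scaleR matrix_vector_mul_assoc WC)
  hence e: "(norm (W *v cx x))^2 = (norm z)^2 - 2*h * inner z (C *v z) + h^2 * (norm (C *v z))^2"
    by (simp only: norm_diff_scaleR_sq)
  have p: "h^2 * (norm (C *v z))^2 \<ge> 0" by simp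
  have q: "2*h * inner z (C *v z) \<le> 2*h * (-\<mu> * (norm z)^2)"
    using Cq[of z] h by (intro mult_left_mono) auto
  have r: "(norm z)^2 * (1 + 2*\<mu>*h) = (norm z)^2 - 2*h * (-\<mu> * (norm z)^2)"
    by (simp add: algebra_simps)
  show ?thesis unfolding z_def[symmetric] using e p q r by linarith
qed

lemma invertible_IhA:
  fixes A :: "real^'n::finite^'n"
  assumes H: "hurwitz A" and h: "h \<ge> 0"
  shows "invertible (vI - h *\<^sub>R A)"
proof -
  have "\<forall>x. (vI - h *\<^sub>R A) *v x = 0 \<longrightarrow> x = 0"
  proof (intro allI impI, rule ccontr)
    fix x assume x0: "x \<noteq> 0" and e: "(vI - h *\<^sub>R A) *v x = 0"
    hence ex: "h *\<^sub>R (A *v x) = x"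
      by (simp add: matrix_vector_mult_diff_rdistrib scaleR_matrix_vector_assoc[symmetric])
    have hne: "h \<noteq> 0" using ex x0 by auto
    have "(1/h) *\<^sub>R x = (1/h) *\<^sub>R (h *\<^sub>R (A *v x))" by (simp only: ex)
    also have "\<dots> = A *v x" using hne by simp
    finally have "A *v x = (1/h) *\<^sub>R x" by simp
    hence "cmat A *v cx x = cx ((1/h) *\<^sub>R x)" by (simp only: cx_mult[symmetric])
    also have "\<dots> = complex_of_real (1/h) *s cx x"
      by (simp add: Finite_Cartesian_Product.vec_eq_iff cx_def)
    finally have "cmat A *v cx x = complex_of_real (1/h) *s cx x" .
    moreover have "cx x \<noteq> 0" using x0 cx_zero_iff by blast
    ultimately have "Re (complex_of_real (1/h)) < 0" using H unfolding hurwitz_def cmat_def by blast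
    thus False using h by simp
  qed
  thus ?thesis by (simp add: invertible_left_inverse matrix_left_invertible_ker)
qed

lemma implicit_euler_step:
  fixes A :: "real^'n::finite^'n" and x :: "real^'n"
  assumes H: "hurwitz A" and h: "h \<ge> 0"
  defines "y \<equiv> x + h *\<^sub>R implicit_euler_F A h x"
  shows "y - h *\<^sub>R (A *v y) = x"
proof -
  define R where "R = matrix_inv (vI - h *\<^sub>R A)"
  have inv: "(vI - h *\<^sub>R A) ** R = vI"
    using invertible_IhA[OF H h] unfolding R_def invertible_def matrix_inv_def by (rule someI2_ex) auto
  define v where "v = R *v x"
  have vx: "v - h *\<^sub>R (A *v v) = x"
  proof -
    have "(vI - h *\<^sub>R A) *v v = x" unfolding v_def by (simp add: matrix_vector_mul_assoc inv)
    thus ?thesis by (simp add: matrix_vector_mult_diff_rdistrib scaleR_matrix_vector_assoc[symmetric])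
  qed
  have "y = x + h *\<^sub>R (A *v v)"
    unfolding y_def implicit_euler_F_def v_def R_def by (simp add: matrix_vector_mul_assoc)
  also have "\<dots> = v" using vx by (metis diff_add_cancel)
  finally show ?thesis using vx by simp
qed



lemma grid_Suc_tau: "hyb_tau \<phi> F x0 u (Suc i) = hyb_tau \<phi> F x0 u i + hyb_step \<phi> F x0 u i"
  by (simp add: hyb_tau_def hyb_step_def split_def Let_def)

lemma grid_Suc_x: "snd (hyb_grid \<phi> F x0 u (Suc i)) =
   snd (hyb_grid \<phi> F x0 u i) + hyb_step \<phi> F x0 u i *\<^sub>R F (hyb_step \<phi> F x0 u i) (snd (hyb_grid \<phi> F x0 u i))"
  by (simp add: hyb_tau_def hyb_step_def split_def Let_def)

lemma grid_0: "hyb_tau \<phi> F x0 u 0 = 0" "snd (hyb_grid \<phi> F x0 u 0) = x0"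
  by (simp_all add: hyb_tau_def)

lemma exp_contr:
  fixes \<mu> r h :: real
  assumes "\<mu> > 0" "r > 0" "0 \<le> h" "h \<le> r"
  shows "1 \<le> (1 + 2*\<mu>*h) * exp (- (2*\<mu>/(1+2*\<mu>*r)) * h)"
proof -
  define b where "b = 2*\<mu>*h / (1 + 2*\<mu>*h)"
  have "2*\<mu>*h \<ge> 0" using assms by simp
  hence pos: "1 + 2*\<mu>*h > 0" by linarith
  have "2*\<mu>*h \<le> 2*\<mu>*r" using assms by simp
  hence "2*\<mu>*h / (1+2*\<mu>*r) \<le> 2*\<mu>*h / (1 + 2*\<mu>*h)"
    using pos \<open>2*\<mu>*h \<ge> 0\<close> by (intro frac_le) auto
  hence "2*\<mu>/(1+2*\<mu>*r) * h \<le> b" unfolding b_def by simp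
  hence "exp (-b) \<le> exp (- (2*\<mu>/(1+2*\<mu>*r)) * h)" by simp
  moreover have "1 - b \<le> exp (-b)" using exp_ge_add_one_self[of "-b"] by simp
  moreover have "(1 + 2*\<mu>*h) * (1 - b) = 1"
  proof -
    have "(1 + 2*\<mu>*h) * (1 - b) = (1 + 2*\<mu>*h) - 2*\<mu>*h" unfolding b_def using pos
      by (simp add: right_diff_distrib)
    thus ?thesis by simp
  qed
  ultimately have "1 - b \<le> exp (- (2*\<mu>/(1+2*\<mu>*r)) * h)"
    and eq: "(1 + 2*\<mu>*h) * (1 - b) = 1" by linarith+
  from mult_left_mono[OF this(1), of "1 + 2*\<mu>*h"] pos eq show ?thesis by simp
qed



lemma decay_main:
  fixes A :: "real^'n::finite^'n"
  assumes H: "hurwitz A" and r: "r > 0"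
  shows "\<exists>K lam. K \<ge> 0 \<and> lam > 0 \<and> (\<forall>x0 u t. admissible_input u \<and> t \<ge> 0 \<longrightarrow>
     norm (hyb_sol (\<lambda>_. r) (implicit_euler_F A) x0 u t) \<le> K * norm x0 * exp (-lam * t))"
proof -
  obtain W Wi C :: "complex^'n^'n" and \<mu> where \<mu>0: "\<mu> > 0" and WiW: "Wi ** W = vI"
    and WC: "W ** cmat A = C ** W" and Cq: "\<And>z. inner z (C *v z) \<le> -\<mu> * (norm z)^2"
    using hurwitz_lyap[OF H] by blast
  define V where "V x = norm (W *v cx x)" for x
  define c1 where "c1 = (\<Sum>i\<in>UNIV. \<Sum>j\<in>UNIV. norm (Wi$i$j))"
  define c2 where "c2 = (\<Sum>i\<in>UNIV. \<Sum>j\<in>UNIV. norm (W$i$j))"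
  have c1: "c1 \<ge> 0" unfolding c1_def by (intro sum_nonneg) auto
  have c2: "c2 \<ge> 0" unfolding c2_def by (intro sum_nonneg) auto
  have V0: "V x \<ge> 0" for x unfolding V_def by simp
  have Vup: "V x \<le> c2 * norm x" for x
    unfolding V_def c2_def using norm_mv_le[of W "cx x"] by (simp add: norm_cx)
  have Vlo: "norm x \<le> c1 * V x" for x
  proof -
    have "norm x = norm (Wi *v (W *v cx x))" by (simp add: matrix_vector_mul_assoc WiW norm_cx)
    also have "\<dots> \<le> c1 * V x" unfolding c1_def V_def by (rule norm_mv_le)
    finally show ?thesis .
  qed
  define \<kappa> where "\<kappa> = 2*\<mu>/(1+2*\<mu>*r)"
  have \<kappa>0: "\<kappa> > 0" unfolding \<kappa>_def using \<mu>0 r by (simp add: add_pos_pos)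
  define F where "F = implicit_euler_F A"
  have main: "norm (hyb_sol (\<lambda>_. r) F x0 u t) \<le> (c1 * c2 * exp (\<kappa> * r / 2)) * norm x0 * exp (-(\<kappa>/2) * t)"
    if adm: "admissible_input u" and t0: "t \<ge> 0" for x0 u t
  proof -
    define \<tau> where "\<tau> = hyb_tau (\<lambda>_. r) F x0 u"
    define hs where "hs = hyb_step (\<lambda>_. r) F x0 u"
    define xs where "xs = (\<lambda>i. snd (hyb_grid (\<lambda>_. r) F x0 u i))"
    have tau_Suc: "\<tau> (Suc i) = \<tau> i + hs i" for i unfolding \<tau>_def hs_def by (rule grid_Suc_tau)
    have xs_Suc: "xs (Suc i) = xs i + hs i *\<^sub>R F (hs i) (xs i)" for i
      unfolding xs_def hs_def by (rule grid_Suc_x)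
    have tau0: "\<tau> 0 = 0" and xs0: "xs 0 = x0" unfolding \<tau>_def xs_def by (simp_all add: grid_0)
    have hs_eq: "hs i = r * exp (- u (\<tau> i))" for i unfolding hs_def \<tau>_def hyb_step_def by simp
    have hs_pos: "hs i > 0" for i using r by (simp add: hs_eq)
    have tau_nn: "\<tau> i \<ge> 0" for i
      by (induction i) (auto simp: tau0 tau_Suc intro: add_nonneg_nonneg less_imp_le[OF hs_pos])
    have hs_le: "hs i \<le> r" for i
    proof -
      have "u (\<tau> i) \<ge> 0" using adm tau_nn[of i] unfolding admissible_input_def by blast
      hence "exp (- u (\<tau> i)) \<le> 1" by simp
      thus ?thesis using r by (simp add: hs_eq mult_left_le)
    qed
    have step: "xs (Suc i) - hs i *\<^sub>R (A *v xs (Suc i)) = xs i" for i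
      unfolding xs_Suc F_def using implicit_euler_step[OF H less_imp_le[OF hs_pos[of i]], of "xs i"] by simp
    have Vdec: "(V (xs i))^2 \<le> exp (-\<kappa> * \<tau> i) * (V x0)^2" for i
    proof (induction i)
      case 0
      show ?case by (simp add: tau0 xs0)
    next
      case (Suc i)
      let ?h = "hs i"
      have c: "(V (xs (Suc i)))^2 * (1 + 2*\<mu>*?h) \<le> (V (xs i))^2"
        unfolding V_def by (rule step_contract[OF WC Cq less_imp_le[OF hs_pos] step])
      have e: "1 \<le> (1 + 2*\<mu>*?h) * exp (-\<kappa> * ?h)"
        unfolding \<kappa>_def using exp_contr[OF \<mu>0 r less_imp_le[OF hs_pos] hs_le] by simp
      have "(V (xs (Suc i)))^2 \<le> (V (xs (Suc i)))^2 * ((1 + 2*\<mu>*?h) * exp (-\<kappa> * ?h))"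
        using mult_left_mono[OF e, of "(V (xs (Suc i)))^2"] by simp
      also have "\<dots> = ((V (xs (Suc i)))^2 * (1 + 2*\<mu>*?h)) * exp (-\<kappa> * ?h)" by (simp add: algebra_simps)
      also have "\<dots> \<le> (V (xs i))^2 * exp (-\<kappa> * ?h)" by (rule mult_right_mono[OF c]) simp
      also have "\<dots> \<le> exp (-\<kappa> * \<tau> i) * (V x0)^2 * exp (-\<kappa> * ?h)" by (rule mult_right_mono[OF Suc.IH]) simp
      also have "\<dots> = exp (-\<kappa> * \<tau> (Suc i)) * (V x0)^2"
        by (simp add: tau_Suc algebra_simps exp_add[symmetric])
      finally show ?case .
    qed
    have xs_bd: "norm (xs i) \<le> c1 * c2 * norm x0 * exp (-(\<kappa>/2) * \<tau> i)" for i
    proof -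
      have sq: "exp (-(\<kappa>/2) * \<tau> i) * exp (-(\<kappa>/2) * \<tau> i) = exp (-\<kappa> * \<tau> i)"
        by (simp add: exp_add[symmetric])
      have "(V (xs i))^2 \<le> (exp (-(\<kappa>/2) * \<tau> i) * V x0)^2"
        using Vdec[of i] sq by (simp add: power2_eq_square algebra_simps)
      hence "V (xs i) \<le> exp (-(\<kappa>/2) * \<tau> i) * V x0"
        by (rule power2_le_imp_le) (simp add: V0)
      also have "\<dots> \<le> exp (-(\<kappa>/2) * \<tau> i) * (c2 * norm x0)" by (rule mult_left_mono[OF Vup]) simp
      finally have "c1 * V (xs i) \<le> c1 * (exp (-(\<kappa>/2) * \<tau> i) * (c2 * norm x0))"
        by (rule mult_left_mono) (rule c1)
      with Vlo[of "xs i"] show ?thesis by (simp add: algebra_simps)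
    qed
    have ex: "\<exists>i. t < \<tau> (Suc i)"
    proof (rule ccontr)
      assume "\<not> (\<exists>i. t < \<tau> (Suc i))"
      hence le: "\<tau> i \<le> t" for i using t0 by (cases i) (auto simp: tau0 not_less)
      obtain M where M: "\<forall>s\<in>{0..t}. \<bar>u s\<bar> \<le> M" using adm t0 unfolding admissible_input_def by blast
      define \<eta> where "\<eta> = r * exp (-M)"
      have \<eta>0: "\<eta> > 0" unfolding \<eta>_def using r by simp
      have hs_ge: "hs i \<ge> \<eta>" for i
      proof -
        have "\<bar>u (\<tau> i)\<bar> \<le> M" using M le[of i] tau_nn[of i] by auto
        hence "u (\<tau> i) \<le> M" by linarith
        hence "exp (-M) \<le> exp (- u (\<tau> i))" by simp
        thus ?thesis unfolding \<eta>_def hs_eq using r by (simp add: mult_left_mono)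
      qed
      have lin: "\<tau> i \<ge> real i * \<eta>" for i
      proof (induction i)
        case 0 show ?case by (simp add: tau0)
      next
        case (Suc i) thus ?case using hs_ge[of i] by (simp add: tau_Suc algebra_simps)
      qed
      obtain n where n: "t / \<eta> < real n" using reals_Archimedean2 by blast
      hence "t < real n * \<eta>" using \<eta>0 by (simp add: field_simps)
      with lin[of n] le[of n] show False by simp
    qed
    define k where "k = (LEAST i. t < \<tau> (Suc i))"
    have tk1: "t < \<tau> (Suc k)" unfolding k_def using ex by (rule LeastI_ex)
    have tk0: "\<tau> k \<le> t"
    proof (cases k)
      case 0 thus ?thesis using t0 by (simp add: tau0)
    next
      case (Suc j)
      have "\<not> t < \<tau> (Suc j)" using not_less_Least[of j "\<lambda>i. t < \<tau> (Suc i)"] Suc unfolding k_def by simp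
      thus ?thesis using Suc by simp
    qed
    have sol: "hyb_sol (\<lambda>_. r) F x0 u t = xs k + (t - \<tau> k) *\<^sub>R F (hs k) (xs k)"
      unfolding hyb_sol_def Let_def k_def \<tau>_def xs_def hs_def by simp
    define s where "s = (t - \<tau> k) / hs k"
    have s0: "s \<ge> 0" and s1: "s \<le> 1" unfolding s_def using tk0 tk1 hs_pos[of k] by (auto simp: tau_Suc field_simps)
    have "(t - \<tau> k) *\<^sub>R F (hs k) (xs k) = s *\<^sub>R (hs k *\<^sub>R F (hs k) (xs k))"
      unfolding s_def using hs_pos[of k] by simp
    also have "\<dots> = s *\<^sub>R (xs (Suc k) - xs k)" by (simp add: xs_Suc)
    finally have "hyb_sol (\<lambda>_. r) F x0 u t = (1 - s) *\<^sub>R xs k + s *\<^sub>R xs (Suc k)"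
      unfolding sol by (simp add: algebra_simps)
    hence "norm (hyb_sol (\<lambda>_. r) F x0 u t) \<le> (1 - s) * norm (xs k) + s * norm (xs (Suc k))"
      using s0 s1 by (metis (no_types, lifting) abs_of_nonneg diff_ge_0_iff_ge norm_scaleR norm_triangle_ineq)
    also have "\<dots> \<le> (1 - s) * (c1 * c2 * norm x0 * exp (-(\<kappa>/2) * \<tau> k)) + s * (c1 * c2 * norm x0 * exp (-(\<kappa>/2) * \<tau> k))"
    proof (intro add_mono mult_left_mono)
      show "norm (xs k) \<le> c1 * c2 * norm x0 * exp (-(\<kappa>/2) * \<tau> k)" by (rule xs_bd)
      have "exp (-(\<kappa>/2) * \<tau> (Suc k)) \<le> exp (-(\<kappa>/2) * \<tau> k)"
        using \<kappa>0 hs_pos[of k] by (simp add: tau_Suc)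
      hence "c1 * c2 * norm x0 * exp (-(\<kappa>/2) * \<tau> (Suc k)) \<le> c1 * c2 * norm x0 * exp (-(\<kappa>/2) * \<tau> k)"
        using c1 c2 by (intro mult_left_mono) auto
      thus "norm (xs (Suc k)) \<le> c1 * c2 * norm x0 * exp (-(\<kappa>/2) * \<tau> k)" using xs_bd[of "Suc k"] by linarith
    qed (use s0 s1 in auto)
    also have "\<dots> = c1 * c2 * norm x0 * exp (-(\<kappa>/2) * \<tau> k)" by (simp add: algebra_simps)
    also have "\<dots> \<le> c1 * c2 * norm x0 * (exp (\<kappa> * r / 2) * exp (-(\<kappa>/2) * t))"
    proof (rule mult_left_mono)
      have "\<tau> k \<ge> t - r" using tk1 hs_le[of k] by (simp add: tau_Suc)
      hence "(\<kappa>/2) * t \<le> (\<kappa>/2) * (r + \<tau> k)" using \<kappa>0 by (intro mult_left_mono) auto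
      hence "-(\<kappa>/2) * \<tau> k \<le> \<kappa> * r / 2 + (-(\<kappa>/2) * t)" by (simp add: algebra_simps)
      thus "exp (-(\<kappa>/2) * \<tau> k) \<le> exp (\<kappa> * r / 2) * exp (-(\<kappa>/2) * t)" by (simp add: exp_add[symmetric])
    qed (use c1 c2 in simp)
    finally show ?thesis by (simp add: algebra_simps)
  qed
  show ?thesis
    apply (rule exI[of _ "c1 * c2 * exp (\<kappa> * r / 2)"], rule exI[of _ "\<kappa>/2"])
    using main c1 c2 \<kappa>0 unfolding F_def by auto
qed



theorem corollary4p16:
  fixes A :: "real^'n^'n" and r :: real
  assumes "hurwitz A" and "r > 0"
  shows "URGAS (\<lambda>_. r) (implicit_euler_F A)"
proof -
  obtain K lam where K: "K \<ge> 0" and lam: "lam > 0" and D: "\<And>x0 u t. admissible_input u \<Longrightarrow> t \<ge> 0 \<Longrightarrow>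
     norm (hyb_sol (\<lambda>_. r) (implicit_euler_F A) x0 u t) \<le> K * norm x0 * exp (-lam * t)"
    using decay_main[OF assms] by blast
  have D1: "norm (hyb_sol (\<lambda>_. r) (implicit_euler_F A) x0 u t) \<le> K * norm x0"
    if "admissible_input u" "t \<ge> 0" for x0 u t
  proof -
    have "exp (-lam * t) \<le> 1" using lam that(2) by simp
    hence "K * norm x0 * exp (-lam * t) \<le> K * norm x0" using K by (simp add: mult_left_le)
    thus ?thesis using D[of u t x0, OF that] by linarith
  qed
  have a: "\<forall>\<epsilon>>0. \<exists>\<delta>>0. \<forall>x0 u t. norm x0 < \<delta> \<and> admissible_input u \<and> t \<ge> 0
              \<longrightarrow> norm (hyb_sol (\<lambda>_. r) (implicit_euler_F A) x0 u t) < \<epsilon>"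
  proof (intro allI impI)
    fix \<epsilon> :: real assume e: "\<epsilon> > 0"
    define \<delta> where "\<delta> = \<epsilon> / (K + 1)"
    have d0: "\<delta> > 0" unfolding \<delta>_def using e K by simp
    have Kd: "K * \<delta> < \<epsilon>" unfolding \<delta>_def using e K by (simp add: field_simps)
    show "\<exists>\<delta>>0. \<forall>x0 u t. norm x0 < \<delta> \<and> admissible_input u \<and> t \<ge> 0
              \<longrightarrow> norm (hyb_sol (\<lambda>_. r) (implicit_euler_F A) x0 u t) < \<epsilon>"
    proof (intro exI[of _ \<delta>] conjI allI impI d0)
      fix x0 :: "real^'n" and u t assume h: "norm x0 < \<delta> \<and> admissible_input u \<and> t \<ge> (0::real)"
      have "K * norm x0 \<le> K * \<delta>" using h K by (intro mult_left_mono) auto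
      thus "norm (hyb_sol (\<lambda>_. r) (implicit_euler_F A) x0 u t) < \<epsilon>" using D1[of u t x0] h Kd by linarith
    qed
  qed
  have b: "\<forall>R. \<exists>B. \<forall>x0 u t. norm x0 \<le> R \<and> admissible_input u \<and> t \<ge> 0
              \<longrightarrow> norm (hyb_sol (\<lambda>_. r) (implicit_euler_F A) x0 u t) \<le> B"
  proof (intro allI)
    fix R :: real
    show "\<exists>B. \<forall>x0 u t. norm x0 \<le> R \<and> admissible_input u \<and> t \<ge> 0
              \<longrightarrow> norm (hyb_sol (\<lambda>_. r) (implicit_euler_F A) x0 u t) \<le> B"
    proof (intro exI[of _ "K * R"] allI impI)
      fix x0 :: "real^'n" and u t assume h: "norm x0 \<le> R \<and> admissible_input u \<and> t \<ge> (0::real)"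
      have "K * norm x0 \<le> K * R" using h K by (intro mult_left_mono) auto
      thus "norm (hyb_sol (\<lambda>_. r) (implicit_euler_F A) x0 u t) \<le> K * R" using D1[of u t x0] h by linarith
    qed
  qed
  have c: "\<forall>\<epsilon>>0. \<forall>R. \<exists>T. \<forall>x0 u t. norm x0 \<le> R \<and> admissible_input u \<and> t \<ge> T
              \<longrightarrow> norm (hyb_sol (\<lambda>_. r) (implicit_euler_F A) x0 u t) \<le> \<epsilon>"
  proof (intro allI impI)
    fix \<epsilon> R :: real assume e: "\<epsilon> > 0"
    define T where "T = K * \<bar>R\<bar> / (\<epsilon> * lam)"
    have T0: "T \<ge> 0" unfolding T_def using K e lam by simp
    show "\<exists>T. \<forall>x0 u t. norm x0 \<le> R \<and> admissible_input u \<and> t \<ge> T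
              \<longrightarrow> norm (hyb_sol (\<lambda>_. r) (implicit_euler_F A) x0 u t) \<le> \<epsilon>"
    proof (intro exI[of _ T] allI impI)
      fix x0 :: "real^'n" and u t assume h: "norm x0 \<le> R \<and> admissible_input u \<and> t \<ge> T"
      hence t0: "t \<ge> 0" using T0 by linarith
      have "K * norm x0 \<le> K * \<bar>R\<bar>" using h K by (intro mult_left_mono) auto
      also have "\<dots> = \<epsilon> * lam * T" unfolding T_def using e lam by simp
      also have "\<dots> \<le> \<epsilon> * lam * t" using h e lam by (intro mult_left_mono) auto
      also have "\<dots> \<le> \<epsilon> * exp (lam * t)"
      proof -
        have "lam * t \<le> exp (lam * t)" using exp_ge_add_one_self[of "lam * t"] by linarith
        thus ?thesis using e by (simp add: mult.assoc)
      qed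
      finally have "K * norm x0 \<le> \<epsilon> * exp (lam * t)" .
      hence "K * norm x0 * exp (-lam * t) \<le> \<epsilon> * exp (lam * t) * exp (-lam * t)"
        by (rule mult_right_mono) simp
      also have "\<dots> = \<epsilon>" by (simp add: exp_add[symmetric] mult.assoc)
      finally show "norm (hyb_sol (\<lambda>_. r) (implicit_euler_F A) x0 u t) \<le> \<epsilon>"
        using D[of u t x0] h t0 by linarith
    qed
  qed
  show ?thesis unfolding URGAS_def using a b c by blast
qed

end
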